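(* Let $M\ge1$ and $b\ge1$ be integers and let $\tilde P_{\max}>0$, $\rho_a,\rho_q>0$, $\sigma_a^2,\sigma_q^2>0$. For nonnegative integers $n_a,n_q$ define $$\mathrm{MSE}(n_a,n_q)=M-M\Big(\frac{\rho_a n_a}{\rho_a n_a+\sigma_a^2}+\frac{2\rho_q n_q\sigma_a^4}{\pi(\rho_q+\sigma_q^2)(\alpha+\beta(n_a)\rho_q n_q)(\rho_a n_a+\sigma_a^2)^2}\Big),$$ where $\alpha=\frac{2}{\pi}\arccos\!\big(\frac{\rho_q}{\rho_q+\sigma_q^2}\big)$ and $\beta(n_a)=\frac{2}{\pi}\arcsin\!\big(\frac{\rho_q}{\rho_q+\sigma_q^2}\big)\frac{1}{\rho_q}-\frac{2\rho_a n_a}{\pi(\rho_q+\sigma_q^2)(\rho_a n_a+\sigma_a^2)}$. Consider the problem $$\min_{n_a,n_q}\ \mathrm{MSE}(n_a,n_q)\quad\text{s.t.}\quad 2^bMn_a+2Mn_q\le\tilde P_{\max},\ \ n_a,n_q\in\mathbb Z_+ .$$ Then this problem can be solved by a one-dimensional search over $n_a\in\{0,1,\dots,\lfloor \tilde P_{\max}/(2^bM)\rfloor\}$, where for each such $n_a$ one takes $n_q=\big\lfloor(\tilde P_{\max}-2^bMn_a)/(2M)\big\rfloor$; that is, the minimum of $\mathrm{MSE}(n_a,\lfloor(\tilde P_{\max}-2^bMn_a)/(2M)\rfloor)$ over these values of $n_a$ is attained at an optimal solution of the problem.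
   Context: $\mathbb Z_+$ denotes the set of nonnegative integers; $\lfloor\cdot\rfloor$ is the floor function. The function $\mathrm{MSE}(n_a,n_q)$ is the mean-squared error of the LMMSE estimator in a mixed-resolution linear Gaussian orthonormal measurement model with $Mn_a$ analog and $Mn_q$ 1-bit quantized measurements, and the constraint models a total ADC power budget with $b$-bit high-resolution ADCs. *)

theory Defs
  imports Complex_Main
begin

definition alpha_c :: "real \<Rightarrow> real \<Rightarrow> real" where
  "alpha_c \<rho>q \<sigma>q2 = 2 / pi * arccos (\<rho>q / (\<rho>q + \<sigma>q2))"

definition beta_c :: "real \<Rightarrow> real \<Rightarrow> real \<Rightarrow> real \<Rightarrow> nat \<Rightarrow> real" where
  "beta_c \<rho>a \<rho>q \<sigma>a2 \<sigma>q2 na =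
     2 / pi * arcsin (\<rho>q / (\<rho>q + \<sigma>q2)) * (1 / \<rho>q)
     - 2 * \<rho>a * real na / (pi * (\<rho>q + \<sigma>q2) * (\<rho>a * real na + \<sigma>a2))"

definition MSE :: "real \<Rightarrow> real \<Rightarrow> real \<Rightarrow> real \<Rightarrow> real \<Rightarrow> nat \<Rightarrow> nat \<Rightarrow> real" where
  "MSE M \<rho>a \<rho>q \<sigma>a2 \<sigma>q2 na nq =
     M - M * (\<rho>a * real na / (\<rho>a * real na + \<sigma>a2)
       + 2 * \<rho>q * real nq * \<sigma>a2 ^ 2 /
         (pi * (\<rho>q + \<sigma>q2) * (alpha_c \<rho>q \<sigma>q2 + beta_c \<rho>a \<rho>q \<sigma>a2 \<sigma>q2 na * \<rho>q * real nq)
            * (\<rho>a * real na + \<sigma>a2) ^ 2))"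

definition feasible :: "nat \<Rightarrow> nat \<Rightarrow> real \<Rightarrow> nat \<Rightarrow> nat \<Rightarrow> bool" where
  "feasible M b P na nq \<longleftrightarrow> 2 ^ b * real M * real na + 2 * real M * real nq \<le> P"

definition nq_of :: "nat \<Rightarrow> nat \<Rightarrow> real \<Rightarrow> nat \<Rightarrow> nat" where
  "nq_of M b P na = nat \<lfloor>(P - 2 ^ b * real M * real na) / (2 * real M)\<rfloor>"

definition na_max :: "nat \<Rightarrow> nat \<Rightarrow> real \<Rightarrow> nat" where
  "na_max M b P = nat \<lfloor>P / (2 ^ b * real M)\<rfloor>"

end

theory Submission
  imports Defs
begin

lemma alpha_pos:
  assumes "\<rho>q > 0" "\<sigma>q2 > 0"
  shows "alpha_c \<rho>q \<sigma>q2 > 0"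
proof -
  let ?r = "\<rho>q / (\<rho>q + \<sigma>q2)"
  have r0: "0 < ?r" and r1: "?r < 1" using assms by (auto simp: field_simps)
  have "arccos 1 < arccos ?r" by (rule arccos_less_arccos) (use r0 r1 in auto)
  then show ?thesis unfolding alpha_c_def by simp
qed

lemma beta_pos:
  assumes "\<rho>a > 0" "\<rho>q > 0" "\<sigma>a2 > 0" "\<sigma>q2 > 0"
  shows "beta_c \<rho>a \<rho>q \<sigma>a2 \<sigma>q2 na \<ge> 0"
proof -
  let ?r = "\<rho>q / (\<rho>q + \<sigma>q2)"
  have r0: "0 < ?r" and r1: "?r < 1" using assms by (auto simp: field_simps)
  have "sin (arcsin ?r) \<le> arcsin ?r"
    by (rule sin_x_le_x) (rule arcsin_nonneg, use r0 r1 in auto)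
  hence ar: "?r \<le> arcsin ?r" using r0 r1 by simp
  have pp: "\<rho>a * real na + \<sigma>a2 > 0" using assms by (simp add: add_nonneg_pos)
  have q: "\<rho>a * real na / (\<rho>a * real na + \<sigma>a2) \<le> 1"
    using assms pp by (simp add: divide_le_eq_1)
  have "2 * \<rho>a * real na / (pi * (\<rho>q + \<sigma>q2) * (\<rho>a * real na + \<sigma>a2))
      = (2 / pi) * (1 / (\<rho>q + \<sigma>q2)) * (\<rho>a * real na / (\<rho>a * real na + \<sigma>a2))"
    by (simp add: field_simps)
  also have "\<dots> \<le> (2 / pi) * (1 / (\<rho>q + \<sigma>q2)) * 1"
    using q assms by (intro mult_left_mono) auto
  also have "\<dots> = 2 / pi * ?r * (1 / \<rho>q)" using assms by (simp add: field_simps)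
  also have "\<dots> \<le> 2 / pi * arcsin ?r * (1 / \<rho>q)"
    using ar assms by (intro mult_right_mono mult_left_mono) auto
  finally show ?thesis unfolding beta_c_def by simp
qed

lemma frac_mono:
  fixes a c :: real and m n :: nat
  assumes "a > 0" "c \<ge> 0" "m \<le> n"
  shows "real m / (a + c * real m) \<le> real n / (a + c * real n)"
proof -
  have p1: "a + c * real m > 0" and p2: "a + c * real n > 0" using assms by (auto intro: add_pos_nonneg)
  have "real m * (a + c * real n) \<le> real n * (a + c * real m)"
    using assms by (simp add: algebra_simps mult_left_mono)
  then show ?thesis using p1 p2 by (simp add: divide_simps)
qed

lemma MSE_mono:
  assumes "M \<ge> 0" "\<rho>a > 0" "\<rho>q > 0" "\<sigma>a2 > 0" "\<sigma>q2 > 0" "m \<le> n"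
  shows "MSE M \<rho>a \<rho>q \<sigma>a2 \<sigma>q2 na n \<le> MSE M \<rho>a \<rho>q \<sigma>a2 \<sigma>q2 na m"
proof -
  define A where "A = alpha_c \<rho>q \<sigma>q2"
  define c where "c = beta_c \<rho>a \<rho>q \<sigma>a2 \<sigma>q2 na * \<rho>q"
  define D where "D = pi * (\<rho>q + \<sigma>q2) * (\<rho>a * real na + \<sigma>a2) ^ 2"
  define K where "K = 2 * \<rho>q * \<sigma>a2 ^ 2"
  have A: "A > 0" unfolding A_def using alpha_pos assms by auto
  have c: "c \<ge> 0" unfolding c_def using beta_pos[OF assms(2-5)] assms by auto
  have pp: "\<rho>a * real na + \<sigma>a2 > 0" using assms by (simp add: add_nonneg_pos)
  have D: "D > 0" unfolding D_def using assms pp by (auto intro!: mult_pos_pos add_pos_nonneg)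
  have K: "K > 0" unfolding K_def using assms by auto
  have eq: "\<And>k. 2 * \<rho>q * real k * \<sigma>a2 ^ 2 /
         (pi * (\<rho>q + \<sigma>q2) * (alpha_c \<rho>q \<sigma>q2 + beta_c \<rho>a \<rho>q \<sigma>a2 \<sigma>q2 na * \<rho>q * real k)
            * (\<rho>a * real na + \<sigma>a2) ^ 2) = (K / D) * (real k / (A + c * real k))"
    unfolding A_def c_def D_def K_def by (simp add: field_simps)
  have "(K / D) * (real m / (A + c * real m)) \<le> (K / D) * (real n / (A + c * real n))"
    using frac_mono[OF A c assms(6)] K D by (intro mult_left_mono) auto
  then have "M * (\<rho>a * real na / (\<rho>a * real na + \<sigma>a2) + (K / D) * (real m / (A + c * real m)))
     \<le> M * (\<rho>a * real na / (\<rho>a * real na + \<sigma>a2) + (K / D) * (real n / (A + c * real n)))"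
    by (rule mult_left_mono[OF add_left_mono assms(1)])
  then show ?thesis unfolding MSE_def eq by linarith
qed

lemma feasible_nq_of:
  assumes "M \<ge> 1" "P > 0" "na \<le> na_max M b P"
  shows "feasible M b P na (nq_of M b P na)"
proof -
  have pos: "(2::real) ^ b * real M > 0" using assms by auto
  have "real na \<le> P / (2 ^ b * real M)"
  proof -
    have "real na \<le> real (nat \<lfloor>P / (2 ^ b * real M)\<rfloor>)" using assms(3) unfolding na_max_def by simp
    also have "\<dots> = of_int \<lfloor>P / (2 ^ b * real M)\<rfloor>" using pos assms(2) by simp
    also have "\<dots> \<le> P / (2 ^ b * real M)" by simp
    finally show ?thesis .
  qed
  hence h: "2 ^ b * real M * real na \<le> P" using pos by (simp add: field_simps)
  define x where "x = (P - 2 ^ b * real M * real na) / (2 * real M)"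
  have x0: "x \<ge> 0" unfolding x_def using h assms by auto
  have "real (nq_of M b P na) = of_int \<lfloor>x\<rfloor>" unfolding nq_of_def x_def[symmetric] using x0 by simp
  also have "\<dots> \<le> x" by simp
  finally have "2 * real M * real (nq_of M b P na) \<le> 2 * real M * x"
    using assms by (intro mult_left_mono) auto
  also have "\<dots> = P - 2 ^ b * real M * real na" unfolding x_def using assms by simp
  finally show ?thesis unfolding feasible_def by simp
qed

lemma feasible_bounds:
  assumes "M \<ge> 1" "feasible M b P ma mq"
  shows "ma \<le> na_max M b P" "mq \<le> nq_of M b P ma"
proof -
  have pos: "(2::real) ^ b * real M > 0" using assms by auto
  have f: "2 ^ b * real M * real ma + 2 * real M * real mq \<le> P" using assms(2) feasible_def by simp
  have "2 ^ b * real M * real ma \<le> P" using f assms by (smt (verit) of_nat_0_le_iff mult_nonneg_nonneg)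
  hence "real ma \<le> P / (2 ^ b * real M)" using pos by (simp add: field_simps)
  thus "ma \<le> na_max M b P" unfolding na_max_def by (simp add: le_nat_floor le_floor_iff nat_le_iff)
  have "real mq \<le> (P - 2 ^ b * real M * real ma) / (2 * real M)" using f assms by (simp add: field_simps)
  hence "int mq \<le> \<lfloor>(P - 2 ^ b * real M * real ma) / (2 * real M)\<rfloor>" by (simp add: le_floor_iff)
  thus "mq \<le> nq_of M b P ma" unfolding nq_of_def by linarith
qed

theorem proposition1:
  fixes M b :: nat and P \<rho>a \<rho>q \<sigma>a2 \<sigma>q2 :: real
  assumes "M \<ge> 1" "b \<ge> 1" "P > 0" "\<rho>a > 0" "\<rho>q > 0" "\<sigma>a2 > 0" "\<sigma>q2 > 0"
  defines "f \<equiv> \<lambda>na. MSE (real M) \<rho>a \<rho>q \<sigma>a2 \<sigma>q2 na (nq_of M b P na)"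
  shows "(\<exists>na\<le>na_max M b P. \<forall>na'\<le>na_max M b P. f na \<le> f na') \<and>
         (\<forall>na\<le>na_max M b P. (\<forall>na'\<le>na_max M b P. f na \<le> f na') \<longrightarrow>
            feasible M b P na (nq_of M b P na) \<and>
            (\<forall>ma mq. feasible M b P ma mq \<longrightarrow>
               f na \<le> MSE (real M) \<rho>a \<rho>q \<sigma>a2 \<sigma>q2 ma mq))"
proof (intro conjI allI impI)
  let ?N = "na_max M b P"
  have "finite (f ` {..?N})" "f ` {..?N} \<noteq> {}" by auto
  then have "Min (f ` {..?N}) \<in> f ` {..?N}" by (rule Min_in)
  then obtain na where na0: "na \<in> {..?N}" "Min (f ` {..?N}) = f na" by (rule imageE)
  then have na: "na \<le> ?N" "f na = Min (f ` {..?N})" by auto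
  have "\<forall>na'\<le>?N. f na \<le> f na'" using na by auto
  with na show "\<exists>na\<le>?N. \<forall>na'\<le>?N. f na \<le> f na'" by blast
next
  fix na assume "na \<le> na_max M b P"
  then show "feasible M b P na (nq_of M b P na)" using feasible_nq_of assms by auto
next
  fix na ma mq
  assume na: "na \<le> na_max M b P" and mn: "\<forall>na'\<le>na_max M b P. f na \<le> f na'"
    and fe: "feasible M b P ma mq"
  have "ma \<le> na_max M b P" "mq \<le> nq_of M b P ma" using feasible_bounds[OF assms(1) fe] by auto
  then have "f na \<le> f ma" using mn by auto
  also have "f ma \<le> MSE (real M) \<rho>a \<rho>q \<sigma>a2 \<sigma>q2 ma mq"
    unfolding f_def using MSE_mono assms \<open>mq \<le> nq_of M b P ma\<close> by auto
  finally show "f na \<le> MSE (real M) \<rho>a \<rho>q \<sigma>a2 \<sigma>q2 ma mq" .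
qed

end
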